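(* Let $C$ be a category with $C(x,y)$ finite for all objects $x,y$. Then $C$ is an essentially finite decomposition category if and only if $C$ is an isocyclic essentially locally finite category.
   Context: Two morphisms $f:x\to y$, $g:z\to w$ are isomorphic if there are isomorphisms $\alpha:x\to z$, $\beta:y\to w$ with $g\alpha=\beta f$; $\overline{f}$ is the class of $f$ and $\overline{C}_1$ the set of classes. For $n\ge1$, an $n$-decomposition of $\overline{f}$ is a tuple $(f_1,\dots,f_n)$ of composable morphisms such that $f_n\cdots f_1=\beta^{-1}f\alpha$ for some isomorphisms $\alpha,\beta$; $\mathrm{D}_n\overline{f}$ is the groupoid of these, with morphisms families of vertical isomorphisms $x_i\to z_i$ making all squares commute. For $n\ge2$, $\mathrm{PD}_n\overline{f}$ is the full subgroupoid of decompositions with no $f_i$ an isomorphism; $\mathrm{PD}_1\overline{f}=\mathrm{D}_1\overline{f}$; $\mathrm{PD}\overline{f}=\bigsqcup_n\mathrm{PD}_n\overline{f}$. $C$ is an essentially finite decomposition category if the set $\overline{\mathrm{PD}}\overline{f}$ of isomorphism classes of objects of $\mathrm{PD}\overline{f}$ is finite for every $\overline{f}$. $C$ is isocyclic if in any diagram $x\to y\to x$ both morphisms are isomorphisms; it is essentially locally finite if all hom-sets are finite, $x\to y\to x$ forces $x\cong y$, and $\{\overline{z}:\exists\ x\to z\to y\}$ (isomorphism classes of objects) is finite for all $x,y$. *)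

theory Defs
  imports Main
begin

text \<open>A (possibly large) category, given by a set of objects, a set of arrows,
domain/codomain maps, composition (comp g f = g after f) and identities.\<close>

record ('o, 'm) cat =
  Ob   :: "'o set"
  Ar   :: "'m set"
  dom  :: "'m \<Rightarrow> 'o"
  cod  :: "'m \<Rightarrow> 'o"
  comp :: "'m \<Rightarrow> 'm \<Rightarrow> 'm"
  idm  :: "'o \<Rightarrow> 'm"

definition hom :: "('o, 'm) cat \<Rightarrow> 'o \<Rightarrow> 'o \<Rightarrow> 'm set" where
  "hom C x y = {f \<in> Ar C. dom C f = x \<and> cod C f = y}"

definition category :: "('o, 'm) cat \<Rightarrow> bool" where
  "category C \<longleftrightarrow>
     (\<forall>f \<in> Ar C. dom C f \<in> Ob C \<and> cod C f \<in> Ob C) \<and>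
     (\<forall>x \<in> Ob C. idm C x \<in> hom C x x) \<and>
     (\<forall>f \<in> Ar C. \<forall>g \<in> Ar C. cod C f = dom C g \<longrightarrow>
         comp C g f \<in> hom C (dom C f) (cod C g)) \<and>
     (\<forall>f \<in> Ar C. comp C f (idm C (dom C f)) = f \<and> comp C (idm C (cod C f)) f = f) \<and>
     (\<forall>f \<in> Ar C. \<forall>g \<in> Ar C. \<forall>h \<in> Ar C. cod C f = dom C g \<longrightarrow> cod C g = dom C h \<longrightarrow>
         comp C h (comp C g f) = comp C (comp C h g) f)"

definition iso :: "('o, 'm) cat \<Rightarrow> 'm \<Rightarrow> bool" where
  "iso C f \<longleftrightarrow> f \<in> Ar C \<and>
     (\<exists>g \<in> hom C (cod C f) (dom C f).
        comp C g f = idm C (dom C f) \<and> comp C f g = idm C (cod C f))"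

definition obj_iso :: "('o, 'm) cat \<Rightarrow> 'o \<Rightarrow> 'o \<Rightarrow> bool" where
  "obj_iso C x y \<longleftrightarrow> (\<exists>f \<in> hom C x y. iso C f)"

fun composite :: "('o, 'm) cat \<Rightarrow> 'm list \<Rightarrow> 'm" where
  "composite C [] = undefined"
| "composite C [f] = f"
| "composite C (f # fs) = comp C (composite C fs) f"

definition composable :: "('o, 'm) cat \<Rightarrow> 'm list \<Rightarrow> bool" where
  "composable C fs \<longleftrightarrow> fs \<noteq> [] \<and> set fs \<subseteq> Ar C \<and>
     (\<forall>i. Suc i < length fs \<longrightarrow> cod C (fs ! i) = dom C (fs ! Suc i))"

text \<open>n-decompositions of the class of f: composable (f1,...,fn) with
  fn...f1 = beta^-1 f alpha for isomorphisms alpha, beta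
  (equivalently beta (fn...f1) = f alpha).\<close>
definition D :: "('o, 'm) cat \<Rightarrow> nat \<Rightarrow> 'm \<Rightarrow> 'm list set" where
  "D C n f = {fs. length fs = n \<and> composable C fs \<and>
     (\<exists>\<alpha> \<beta>. \<alpha> \<in> hom C (dom C (hd fs)) (dom C f) \<and> iso C \<alpha> \<and>
            \<beta> \<in> hom C (cod C (last fs)) (cod C f) \<and> iso C \<beta> \<and>
            comp C \<beta> (composite C fs) = comp C f \<alpha>)}"

definition PD_n :: "('o, 'm) cat \<Rightarrow> nat \<Rightarrow> 'm \<Rightarrow> 'm list set" where
  "PD_n C n f = (if n = 1 then D C 1 f
                 else {fs \<in> D C n f. \<forall>g \<in> set fs. \<not> iso C g})"

definition PD :: "('o, 'm) cat \<Rightarrow> 'm \<Rightarrow> 'm list set" where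
  "PD C f = (\<Union>n \<in> {1..}. PD_n C n f)"

text \<open>Isomorphism of decompositions (morphism in the groupoid D_n):
  a family of vertical isomorphisms phi_0, ..., phi_n between the objects
  x_0 \<rightarrow> x_1 \<rightarrow> ... \<rightarrow> x_n and z_0 \<rightarrow> ... \<rightarrow> z_n making all squares commute.\<close>
definition dec_iso :: "('o, 'm) cat \<Rightarrow> 'm list \<Rightarrow> 'm list \<Rightarrow> bool" where
  "dec_iso C fs gs \<longleftrightarrow> length fs = length gs \<and>
     (\<exists>\<phi> :: nat \<Rightarrow> 'm.
        \<phi> 0 \<in> hom C (dom C (fs ! 0)) (dom C (gs ! 0)) \<and>
        (\<forall>i < length fs. \<phi> (Suc i) \<in> hom C (cod C (fs ! i)) (cod C (gs ! i))) \<and>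
        (\<forall>i \<le> length fs. iso C (\<phi> i)) \<and>
        (\<forall>i < length fs. comp C (\<phi> (Suc i)) (fs ! i) = comp C (gs ! i) (\<phi> i)))"

definition ess_finite_decomposition :: "('o, 'm) cat \<Rightarrow> bool" where
  "ess_finite_decomposition C \<longleftrightarrow>
     (\<forall>f \<in> Ar C. finite (PD C f // {(d, e). d \<in> PD C f \<and> e \<in> PD C f \<and> dec_iso C d e}))"

definition isocyclic :: "('o, 'm) cat \<Rightarrow> bool" where
  "isocyclic C \<longleftrightarrow>
     (\<forall>x \<in> Ob C. \<forall>y \<in> Ob C. \<forall>f \<in> hom C x y. \<forall>g \<in> hom C y x. iso C f \<and> iso C g)"

definition ess_locally_finite :: "('o, 'm) cat \<Rightarrow> bool" where
  "ess_locally_finite C \<longleftrightarrow>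
     (\<forall>x \<in> Ob C. \<forall>y \<in> Ob C. finite (hom C x y)) \<and>
     (\<forall>x \<in> Ob C. \<forall>y \<in> Ob C. hom C x y \<noteq> {} \<longrightarrow> hom C y x \<noteq> {} \<longrightarrow> obj_iso C x y) \<and>
     (\<forall>x \<in> Ob C. \<forall>y \<in> Ob C.
        finite ({z \<in> Ob C. hom C x z \<noteq> {} \<and> hom C z y \<noteq> {}}
                // {(a, b). a \<in> Ob C \<and> b \<in> Ob C \<and> obj_iso C a b}))"

end

theory Submission imports Defs begin

primrec epow :: "('o, 'm) cat \<Rightarrow> 'm \<Rightarrow> 'o \<Rightarrow> nat \<Rightarrow> 'm" where
  "epow C e w 0 = idm C w"
| "epow C e w (Suc k) = comp C (epow C e w k) e"

locale catC =
  fixes C :: "('o, 'm) cat"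
  assumes cat: "category C"
begin

lemma hom_iff: "f \<in> hom C x y \<longleftrightarrow> f \<in> Ar C \<and> dom C f = x \<and> cod C f = y"
  by (simp add: hom_def)

lemma C1: "\<forall>f \<in> Ar C. dom C f \<in> Ob C \<and> cod C f \<in> Ob C"
  using cat unfolding category_def by (elim conjE) assumption
lemma C2: "\<forall>x \<in> Ob C. idm C x \<in> hom C x x"
  using cat unfolding category_def by (elim conjE) assumption
lemma C3: "\<forall>f \<in> Ar C. \<forall>g \<in> Ar C. cod C f = dom C g \<longrightarrow>
         comp C g f \<in> hom C (dom C f) (cod C g)"
  using cat unfolding category_def by (elim conjE) assumption
lemma C4: "\<forall>f \<in> Ar C. comp C f (idm C (dom C f)) = f \<and> comp C (idm C (cod C f)) f = f"
  using cat unfolding category_def by (elim conjE) assumption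
lemma C5: "\<forall>f \<in> Ar C. \<forall>g \<in> Ar C. \<forall>h \<in> Ar C. cod C f = dom C g \<longrightarrow> cod C g = dom C h \<longrightarrow>
         comp C h (comp C g f) = comp C (comp C h g) f"
  using cat unfolding category_def by (elim conjE) assumption

lemma dom_ob: "f \<in> Ar C \<Longrightarrow> dom C f \<in> Ob C" using C1 by blast
lemma cod_ob: "f \<in> Ar C \<Longrightarrow> cod C f \<in> Ob C" using C1 by blast
lemma id_hom: "x \<in> Ob C \<Longrightarrow> idm C x \<in> hom C x x" using C2 by blast
lemma comp_hom: "f \<in> hom C x y \<Longrightarrow> g \<in> hom C y z \<Longrightarrow> comp C g f \<in> hom C x z"
  using C3 unfolding hom_iff by metis
lemma id_r: "f \<in> hom C x y \<Longrightarrow> comp C f (idm C x) = f"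
  using C4 unfolding hom_iff by metis
lemma id_l: "f \<in> hom C x y \<Longrightarrow> comp C (idm C y) f = f"
  using C4 unfolding hom_iff by metis
lemma assoc: "f \<in> hom C x y \<Longrightarrow> g \<in> hom C y z \<Longrightarrow> h \<in> hom C z w \<Longrightarrow>
   comp C h (comp C g f) = comp C (comp C h g) f"
  using C5 unfolding hom_iff by metis

lemma iso_id: "x \<in> Ob C \<Longrightarrow> iso C (idm C x)"
  unfolding iso_def using id_hom[of x] id_l[of "idm C x" x x] by (auto simp: hom_iff)

definition invC :: "'m \<Rightarrow> 'm" where
  "invC f = (SOME g. g \<in> hom C (cod C f) (dom C f) \<and>
        comp C g f = idm C (dom C f) \<and> comp C f g = idm C (cod C f))"

lemma invC: assumes "iso C f" "f \<in> hom C x y"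
  shows "invC f \<in> hom C y x" "comp C (invC f) f = idm C x" "comp C f (invC f) = idm C y"
proof -
  have "\<exists>g. g \<in> hom C (cod C f) (dom C f) \<and>
        comp C g f = idm C (dom C f) \<and> comp C f g = idm C (cod C f)"
    using assms(1) unfolding iso_def by blast
  from someI_ex[OF this] assms(2) show "invC f \<in> hom C y x" "comp C (invC f) f = idm C x" "comp C f (invC f) = idm C y"
    unfolding invC_def by (auto simp: hom_iff)
qed

lemma iso_hom: "iso C f \<Longrightarrow> f \<in> hom C (dom C f) (cod C f)" unfolding iso_def hom_def by auto

lemma iso_invC: assumes "iso C f" "f \<in> hom C x y" shows "iso C (invC f)"
  unfolding iso_def using invC[OF assms] assms by (auto simp: hom_iff)

lemma iso_comp: assumes "iso C f" "f \<in> hom C x y" "iso C g" "g \<in> hom C y z"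
  shows "iso C (comp C g f)"
proof -
  note F = invC[OF assms(1,2)] and G = invC[OF assms(3,4)]
  let ?h = "comp C (invC f) (invC g)"
  have gf: "comp C g f \<in> hom C x z" using comp_hom assms by blast
  have h: "?h \<in> hom C z x" using comp_hom F G by blast
  have "comp C ?h (comp C g f) = comp C (invC f) (comp C (invC g) (comp C g f))"
    using assoc[OF gf G(1) F(1)] by simp
  also have "comp C (invC g) (comp C g f) = comp C (comp C (invC g) g) f"
    using assoc[OF assms(2,4) G(1)] .
  also have "\<dots> = f" using G(2) id_l assms(2) by simp
  finally have 1: "comp C ?h (comp C g f) = idm C x" using F by simp
  have "comp C (comp C g f) ?h = comp C g (comp C f (comp C (invC f) (invC g)))"
    using assoc[OF h assms(2,4)] by simp
  also have "comp C f (comp C (invC f) (invC g)) = comp C (comp C f (invC f)) (invC g)"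
    using assoc[OF G(1) F(1) assms(2)] .
  also have "\<dots> = invC g" using F(3) id_l G(1) by simp
  finally have 2: "comp C (comp C g f) ?h = idm C z" using G by simp
  have "cod C (comp C g f) = z" "dom C (comp C g f) = x" using gf by (auto simp: hom_iff)
  then show ?thesis unfolding iso_def using gf h 1 2 hom_iff by metis
qed

lemma obj_iso_refl: "x \<in> Ob C \<Longrightarrow> obj_iso C x x"
  unfolding obj_iso_def using id_hom iso_id by blast
lemma obj_iso_sym: "obj_iso C x y \<Longrightarrow> obj_iso C y x"
  unfolding obj_iso_def by (metis invC(1) iso_invC)
lemma obj_iso_trans: "obj_iso C x y \<Longrightarrow> obj_iso C y z \<Longrightarrow> obj_iso C x z"
  unfolding obj_iso_def by (metis comp_hom iso_comp)
lemma obj_iso_ob: "obj_iso C x y \<Longrightarrow> x \<in> Ob C \<and> y \<in> Ob C"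
  unfolding obj_iso_def hom_def using dom_ob cod_ob by blast

definition ob :: "'m list \<Rightarrow> nat \<Rightarrow> 'o" where
  "ob fs i = (if i = 0 then dom C (fs!0) else cod C (fs!(i-1)))"

lemma ob_0: "ob fs 0 = dom C (fs!0)" and ob_Suc: "ob fs (Suc i) = cod C (fs!i)"
  by (auto simp: ob_def)

lemma composable_Cons: "composable C (f # fs) \<longleftrightarrow>
   f \<in> Ar C \<and> (fs = [] \<or> (composable C fs \<and> cod C f = dom C (hd fs)))"
proof
  assume A: "composable C (f # fs)"
  then have "f \<in> Ar C" "set fs \<subseteq> Ar C" unfolding composable_def by auto
  moreover have "fs \<noteq> [] \<Longrightarrow> cod C f = dom C (hd fs)"
    using A unfolding composable_def by (metis hd_conv_nth length_Cons nth_Cons_0 nth_Cons_Suc length_greater_0_conv Suc_less_eq)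
  moreover have "\<forall>i. Suc i < length fs \<longrightarrow> cod C (fs ! i) = dom C (fs ! Suc i)"
  proof (intro allI impI)
    fix i assume "Suc i < length fs"
    then have "Suc (Suc i) < length (f # fs)" by simp
    then show "cod C (fs ! i) = dom C (fs ! Suc i)" using A unfolding composable_def
      by (metis nth_Cons_Suc)
  qed
  ultimately show "f \<in> Ar C \<and> (fs = [] \<or> (composable C fs \<and> cod C f = dom C (hd fs)))"
    unfolding composable_def by blast
next
  assume A: "f \<in> Ar C \<and> (fs = [] \<or> (composable C fs \<and> cod C f = dom C (hd fs)))"
  show "composable C (f # fs)"
  proof (cases "fs = []")
    case True then show ?thesis using A unfolding composable_def by auto
  next
    case False
    then have B: "composable C fs" "cod C f = dom C (hd fs)" using A by auto
    have "\<forall>i. Suc i < length (f # fs) \<longrightarrow> cod C ((f # fs) ! i) = dom C ((f # fs) ! Suc i)"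
    proof (intro allI impI)
      fix i assume i: "Suc i < length (f # fs)"
      show "cod C ((f # fs) ! i) = dom C ((f # fs) ! Suc i)"
      proof (cases i)
        case 0 then show ?thesis using B False by (simp add: hd_conv_nth)
      next
        case (Suc j) then show ?thesis using B(1) i unfolding composable_def by simp
      qed
    qed
    then show ?thesis using A B unfolding composable_def by auto
  qed
qed


lemma composable_nth_hom: assumes "composable C fs" "i < length fs"
  shows "fs!i \<in> hom C (ob fs i) (ob fs (Suc i))"
proof -
  have "fs!i \<in> Ar C" using assms unfolding composable_def by auto
  moreover have "dom C (fs!i) = ob fs i"
  proof (cases i)
    case (Suc j) then show ?thesis using assms unfolding composable_def by (simp add: ob_Suc)
  qed (simp add: ob_0)
  ultimately show ?thesis by (simp add: hom_iff ob_Suc)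
qed

lemma composite_hom: "composable C fs \<Longrightarrow> composite C fs \<in> hom C (ob fs 0) (ob fs (length fs))"
proof (induction fs)
  case Nil then show ?case by (simp add: composable_def)
next
  case (Cons f fs)
  show ?case
  proof (cases fs)
    case Nil then show ?thesis using Cons.prems by (simp add: composable_def hom_iff ob_0 ob_Suc)
  next
    case (Cons g gs)
    have c: "composable C fs" "cod C f = dom C g" "f \<in> Ar C" using Cons.prems composable_Cons Cons by auto
    have "composite C fs \<in> hom C (dom C g) (cod C (fs ! (length fs - 1)))" using Cons.IH[OF c(1)] Cons
      by (simp add: ob_def)
    moreover have "f \<in> hom C (dom C f) (dom C g)" using c by (simp add: hom_iff)
    ultimately show ?thesis using Cons by (simp add: comp_hom ob_def)
  qed
qed

lemma dec_iso_alt: "dec_iso C fs gs \<longleftrightarrow> length fs = length gs \<and>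
   (\<exists>\<phi>. (\<forall>i \<le> length fs. \<phi> i \<in> hom C (ob fs i) (ob gs i) \<and> iso C (\<phi> i)) \<and>
        (\<forall>i < length fs. comp C (\<phi> (Suc i)) (fs ! i) = comp C (gs ! i) (\<phi> i)))"
proof -
  have "\<And>\<phi>. (\<forall>i \<le> length fs. \<phi> i \<in> hom C (ob fs i) (ob gs i)) \<longleftrightarrow>
     \<phi> 0 \<in> hom C (dom C (fs ! 0)) (dom C (gs ! 0)) \<and>
        (\<forall>i < length fs. \<phi> (Suc i) \<in> hom C (cod C (fs ! i)) (cod C (gs ! i)))"
    by (metis (no_types, lifting) Suc_le_eq le0 not0_implies_Suc not_le ob_0 ob_Suc)
  then show ?thesis unfolding dec_iso_def by blast
qed

lemma square_inv:
  assumes a: "a \<in> hom C p q" and b: "b \<in> hom C p' q'" and f: "f \<in> hom C p p'" "iso C f"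
    and g: "g \<in> hom C q q'" "iso C g" and sq: "comp C g a = comp C b f"
  shows "comp C (invC g) b = comp C a (invC f)"
proof -
  note F = invC[OF f(2,1)] and G = invC[OF g(2,1)]
  have "comp C (invC g) b = comp C (invC g) (comp C b (comp C f (invC f)))"
    using F(3) id_r b by simp
  also have "\<dots> = comp C (invC g) (comp C (comp C b f) (invC f))" using assoc[OF F(1) f(1) b] by simp
  also have "\<dots> = comp C (invC g) (comp C g (comp C a (invC f)))" using assoc[OF F(1) a g(1)] sq by simp
  also have "\<dots> = comp C (comp C (invC g) g) (comp C a (invC f))"
    using assoc[OF comp_hom[OF F(1) a] g(1) G(1)] by simp
  also have "\<dots> = comp C a (invC f)" using G(2) id_l comp_hom[OF F(1) a] by simp
  finally show ?thesis .
qed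

lemma square_comp:
  assumes a: "a \<in> hom C p q" and b: "b \<in> hom C p' q'" and c: "c \<in> hom C p'' q''"
    and f: "f \<in> hom C p p'" and g: "g \<in> hom C q q'"
    and f': "f' \<in> hom C p' p''" and g': "g' \<in> hom C q' q''"
    and sq: "comp C g a = comp C b f" and sq': "comp C g' b = comp C c f'"
  shows "comp C (comp C g' g) a = comp C c (comp C f' f)"
proof -
  have "comp C (comp C g' g) a = comp C g' (comp C g a)" using assoc[OF a g g'] by simp
  also have "\<dots> = comp C g' (comp C b f)" using sq by simp
  also have "\<dots> = comp C (comp C g' b) f" using assoc[OF f b g'] by simp
  also have "\<dots> = comp C (comp C c f') f" using sq' by simp
  also have "\<dots> = comp C c (comp C f' f)" using assoc[OF f f' c] by simp
  finally show ?thesis .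
qed

lemma dec_iso_refl: assumes "composable C fs" shows "dec_iso C fs fs"
proof -
  define \<phi> where "\<phi> i = idm C (ob fs i)" for i
  have ob: "ob fs i \<in> Ob C" if "i \<le> length fs" for i
  proof (cases i)
    case 0 then show ?thesis using assms dom_ob unfolding composable_def by (simp add: subset_iff ob_0)
  next
    case (Suc j) then show ?thesis using assms cod_ob that unfolding composable_def by (simp add: subset_iff ob_Suc)
  qed
  have "\<forall>i \<le> length fs. \<phi> i \<in> hom C (ob fs i) (ob fs i) \<and> iso C (\<phi> i)"
    using ob id_hom iso_id unfolding \<phi>_def by blast
  moreover have "\<forall>i < length fs. comp C (\<phi> (Suc i)) (fs ! i) = comp C (fs ! i) (\<phi> i)"
    using composable_nth_hom[OF assms] id_l id_r unfolding \<phi>_def by metis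
  ultimately show ?thesis unfolding dec_iso_alt by blast
qed

lemma dec_iso_sym: assumes "composable C fs" "composable C gs" "dec_iso C fs gs" shows "dec_iso C gs fs"
proof -
  obtain \<phi> where L: "length fs = length gs" and P: "\<forall>i \<le> length fs. \<phi> i \<in> hom C (ob fs i) (ob gs i) \<and> iso C (\<phi> i)"
     and S: "\<forall>i < length fs. comp C (\<phi> (Suc i)) (fs ! i) = comp C (gs ! i) (\<phi> i)"
    using assms(3) unfolding dec_iso_alt by blast
  define \<psi> where "\<psi> i = invC (\<phi> i)" for i
  have "\<forall>i \<le> length gs. \<psi> i \<in> hom C (ob gs i) (ob fs i) \<and> iso C (\<psi> i)"
    using P L invC iso_invC unfolding \<psi>_def by metis
  moreover have "\<forall>i < length gs. comp C (\<psi> (Suc i)) (gs ! i) = comp C (fs ! i) (\<psi> i)"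
  proof (intro allI impI)
    fix i assume i: "i < length gs"
    show "comp C (\<psi> (Suc i)) (gs ! i) = comp C (fs ! i) (\<psi> i)"
      unfolding \<psi>_def
      apply (rule square_inv[OF composable_nth_hom[OF assms(1)] composable_nth_hom[OF assms(2)]])
      using i L P S by auto
  qed
  ultimately show ?thesis using L unfolding dec_iso_alt by auto
qed

lemma dec_iso_trans: assumes "composable C fs" "composable C gs" "composable C hs"
  "dec_iso C fs gs" "dec_iso C gs hs" shows "dec_iso C fs hs"
proof -
  obtain \<phi> where L: "length fs = length gs" and P: "\<forall>i \<le> length fs. \<phi> i \<in> hom C (ob fs i) (ob gs i) \<and> iso C (\<phi> i)"
     and S: "\<forall>i < length fs. comp C (\<phi> (Suc i)) (fs ! i) = comp C (gs ! i) (\<phi> i)"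
    using assms(4) unfolding dec_iso_alt by blast
  obtain \<psi> where L': "length gs = length hs" and P': "\<forall>i \<le> length gs. \<psi> i \<in> hom C (ob gs i) (ob hs i) \<and> iso C (\<psi> i)"
     and S': "\<forall>i < length gs. comp C (\<psi> (Suc i)) (gs ! i) = comp C (hs ! i) (\<psi> i)"
    using assms(5) unfolding dec_iso_alt by blast
  define \<chi> where "\<chi> i = comp C (\<psi> i) (\<phi> i)" for i
  have "\<forall>i \<le> length fs. \<chi> i \<in> hom C (ob fs i) (ob hs i) \<and> iso C (\<chi> i)"
    using P P' L comp_hom iso_comp unfolding \<chi>_def by metis
  moreover have "\<forall>i < length fs. comp C (\<chi> (Suc i)) (fs ! i) = comp C (hs ! i) (\<chi> i)"
  proof (intro allI impI)
    fix i assume i: "i < length fs"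
    show "comp C (\<chi> (Suc i)) (fs ! i) = comp C (hs ! i) (\<chi> i)"
      unfolding \<chi>_def
      apply (rule square_comp[OF composable_nth_hom[OF assms(1)] composable_nth_hom[OF assms(2)] composable_nth_hom[OF assms(3)]])
      using i L L' P S P' S' by auto
  qed
  ultimately show ?thesis using L L' unfolding dec_iso_alt by auto
qed

lemma ob_Cons: assumes "composable C (f # fs)" "fs \<noteq> []" shows "ob (f # fs) (Suc i) = ob fs i"
  using assms composable_Cons[of f fs] by (cases i) (auto simp: ob_def hd_conv_nth)

lemma composite_square:
  assumes "composable C fs" "composable C gs" "length fs = length gs"
    "\<forall>i \<le> length fs. \<phi> i \<in> hom C (ob fs i) (ob gs i)"
    "\<forall>i < length fs. comp C (\<phi> (Suc i)) (fs ! i) = comp C (gs ! i) (\<phi> i)"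
  shows "comp C (\<phi> (length fs)) (composite C fs) = comp C (composite C gs) (\<phi> 0)"
  using assms
proof (induction fs arbitrary: gs \<phi>)
  case Nil then show ?case by (simp add: composable_def)
next
  case (Cons f fs)
  obtain g gs' where gs: "gs = g # gs'" using Cons.prems(3) by (cases gs) auto
  show ?case
  proof (cases fs)
    case Nil then show ?thesis using Cons.prems gs by simp
  next
    case (Cons f' rest)
    have gs'ne: "gs' \<noteq> []" using Cons.prems(3) gs Cons by auto
    have cf: "composable C fs" "cod C f = dom C (hd fs)" using Cons.prems(1) composable_Cons Cons by auto
    have cg: "composable C gs'" using Cons.prems(2) composable_Cons gs gs'ne by auto
    have obf: "ob (f # fs) (Suc i) = ob fs i" for i using ob_Cons Cons.prems(1) Cons by auto
    have obg: "ob (g # gs') (Suc i) = ob gs' i" for i using ob_Cons Cons.prems(2) gs gs'ne by auto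
    have h1: "\<forall>i \<le> length fs. \<phi> (Suc i) \<in> hom C (ob fs i) (ob gs' i)"
    proof (intro allI impI)
      fix i assume "i \<le> length fs"
      then have "Suc i \<le> length (f # fs)" by simp
      then show "\<phi> (Suc i) \<in> hom C (ob fs i) (ob gs' i)" using Cons.prems(4) obf obg gs by metis
    qed
    have h2: "\<forall>i < length fs. comp C (\<phi> (Suc (Suc i))) (fs ! i) = comp C (gs' ! i) (\<phi> (Suc i))"
    proof (intro allI impI)
      fix i assume "i < length fs"
      then have "Suc i < length (f # fs)" by simp
      then show "comp C (\<phi> (Suc (Suc i))) (fs ! i) = comp C (gs' ! i) (\<phi> (Suc i))"
        using Cons.prems(5) gs by (metis nth_Cons_Suc)
    qed
    have IH: "comp C (\<phi> (Suc (length fs))) (composite C fs) = comp C (composite C gs') (\<phi> 1)"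
      using Cons.IH[OF cf(1) cg _ h1 h2] Cons.prems(3) gs by simp
    have f: "f \<in> hom C (ob (f#fs) 0) (ob fs 0)" using composable_nth_hom[OF Cons.prems(1), of 0] obf by simp
    have g: "g \<in> hom C (ob gs 0) (ob gs' 0)" using composable_nth_hom[OF Cons.prems(2), of 0] obg gs by simp
    have Cf: "composite C fs \<in> hom C (ob fs 0) (ob fs (length fs))" using composite_hom[OF cf(1)] .
    have Cg: "composite C gs' \<in> hom C (ob gs' 0) (ob gs' (length gs'))" using composite_hom[OF cg] .
    have P0: "\<phi> 0 \<in> hom C (ob (f#fs) 0) (ob gs 0)" using Cons.prems(4) by auto
    have P1: "\<phi> 1 \<in> hom C (ob fs 0) (ob gs' 0)" using Cons.prems(4) obf obg gs
      by (metis One_nat_def Suc_le_mono le0 length_Cons)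
    have Pn: "\<phi> (Suc (length fs)) \<in> hom C (ob fs (length fs)) (ob gs' (length gs'))"
      using Cons.prems(3,4) obf obg gs by (metis le_refl length_Cons)
    have sq0: "comp C (\<phi> 1) f = comp C g (\<phi> 0)" using Cons.prems(5) gs by auto
    have "comp C (\<phi> (length (f # fs))) (composite C (f # fs))
        = comp C (\<phi> (Suc (length fs))) (comp C (composite C fs) f)" using Cons by simp
    also have "\<dots> = comp C (comp C (\<phi> (Suc (length fs))) (composite C fs)) f"
      using assoc[OF f Cf Pn] .
    also have "\<dots> = comp C (comp C (composite C gs') (\<phi> 1)) f" using IH by simp
    also have "\<dots> = comp C (composite C gs') (comp C (\<phi> 1) f)" using assoc[OF f P1 Cg] by simp
    also have "\<dots> = comp C (composite C gs') (comp C g (\<phi> 0))" using sq0 by simp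
    also have "\<dots> = comp C (comp C (composite C gs') g) (\<phi> 0)" using assoc[OF P0 g Cg] .
    also have "\<dots> = comp C (composite C gs) (\<phi> 0)" using gs gs'ne by (cases gs') auto
    finally show ?thesis .
  qed
qed

lemma ob_last: "fs \<noteq> [] \<Longrightarrow> ob fs (length fs) = cod C (last fs)"
  by (cases fs rule: rev_cases) (auto simp: ob_def nth_append)
lemma ob_hd: "fs \<noteq> [] \<Longrightarrow> ob fs 0 = dom C (hd fs)"
  by (simp add: ob_def hd_conv_nth)

lemma iso_of_square:
  assumes a: "a \<in> hom C p q" and b: "b \<in> hom C p' q'" and f: "f \<in> hom C p p'" "iso C f"
    and g: "g \<in> hom C q q'" "iso C g" and sq: "comp C g a = comp C b f" and bi: "iso C b"
  shows "iso C a"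
proof -
  note F = invC[OF f(2,1)] and G = invC[OF g(2,1)]
  have e: "comp C (invC g) b = comp C a (invC f)" using square_inv[OF a b f g sq] .
  have "a = comp C a (comp C (invC f) f)" using F(2) id_r a by simp
  also have "\<dots> = comp C (comp C a (invC f)) f" using assoc[OF f(1) F(1) a] .
  also have "\<dots> = comp C (comp C (invC g) b) f" using e by simp
  finally have "a = comp C (comp C (invC g) b) f" .
  moreover have "iso C (comp C (invC g) b)" using iso_comp[OF bi b iso_invC[OF g(2,1)] G(1)] .
  ultimately show ?thesis using iso_comp[OF f(2,1) _ comp_hom[OF b G(1)]] by metis
qed

lemma D_transport:
  assumes d: "d \<in> D C n f" and s: "composable C s" and di: "dec_iso C d s" and fA: "f \<in> Ar C"
  shows "s \<in> D C n f"
proof -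
  have cd: "composable C d" and ld: "length d = n" using d unfolding D_def by auto
  obtain \<alpha> \<beta> where A: "\<alpha> \<in> hom C (dom C (hd d)) (dom C f)" "iso C \<alpha>"
     and B: "\<beta> \<in> hom C (cod C (last d)) (cod C f)" "iso C \<beta>"
     and E: "comp C \<beta> (composite C d) = comp C f \<alpha>" using d unfolding D_def by blast
  obtain \<phi> where L: "length d = length s" and P: "\<forall>i \<le> length d. \<phi> i \<in> hom C (ob d i) (ob s i) \<and> iso C (\<phi> i)"
     and S: "\<forall>i < length d. comp C (\<phi> (Suc i)) (d ! i) = comp C (s ! i) (\<phi> i)"
    using di unfolding dec_iso_alt by blast
  have dne: "d \<noteq> []" "s \<noteq> []" using cd s unfolding composable_def by auto
  have CS: "comp C (\<phi> n) (composite C d) = comp C (composite C s) (\<phi> 0)"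
    using composite_square[OF cd s L] P S ld by auto
  have P0: "\<phi> 0 \<in> hom C (ob d 0) (ob s 0)" "iso C (\<phi> 0)" using P by auto
  have Pn: "\<phi> n \<in> hom C (ob d n) (ob s n)" "iso C (\<phi> n)" using P ld by auto
  have Cd: "composite C d \<in> hom C (ob d 0) (ob d n)" using composite_hom[OF cd] ld by simp
  have Cs: "composite C s \<in> hom C (ob s 0) (ob s n)" using composite_hom[OF s] ld L by simp
  have A': "\<alpha> \<in> hom C (ob d 0) (dom C f)" using A ob_hd dne by simp
  have B': "\<beta> \<in> hom C (ob d n) (cod C f)" using B ob_last[OF dne(1)] ld by simp
  have fh: "f \<in> hom C (dom C f) (cod C f)" using fA unfolding hom_def by auto
  note I0 = invC[OF P0(2,1)] and In = invC[OF Pn(2,1)]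
  define \<alpha>' where "\<alpha>' = comp C \<alpha> (invC (\<phi> 0))"
  define \<beta>' where "\<beta>' = comp C \<beta> (invC (\<phi> n))"
  have A'': "\<alpha>' \<in> hom C (ob s 0) (dom C f)" "iso C \<alpha>'"
    unfolding \<alpha>'_def using comp_hom[OF I0(1) A'] iso_comp[OF iso_invC[OF P0(2,1)] I0(1) A(2) A'] by auto
  have B'': "\<beta>' \<in> hom C (ob s n) (cod C f)" "iso C \<beta>'"
    unfolding \<beta>'_def using comp_hom[OF In(1) B'] iso_comp[OF iso_invC[OF Pn(2,1)] In(1) B(2) B'] by auto
  have e: "comp C (invC (\<phi> n)) (composite C s) = comp C (composite C d) (invC (\<phi> 0))"
    using square_inv[OF Cd Cs P0 Pn CS] .
  have "comp C \<beta>' (composite C s) = comp C \<beta> (comp C (invC (\<phi> n)) (composite C s))"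
    unfolding \<beta>'_def using assoc[OF Cs In(1) B'] by simp
  also have "\<dots> = comp C \<beta> (comp C (composite C d) (invC (\<phi> 0)))" using e by simp
  also have "\<dots> = comp C (comp C \<beta> (composite C d)) (invC (\<phi> 0))" using assoc[OF I0(1) Cd B'] .
  also have "\<dots> = comp C (comp C f \<alpha>) (invC (\<phi> 0))" using E by simp
  also have "\<dots> = comp C f \<alpha>'" unfolding \<alpha>'_def using assoc[OF I0(1) A' fh] by simp
  finally have "comp C \<beta>' (composite C s) = comp C f \<alpha>'" .
  then show ?thesis unfolding D_def using s L ld A'' B'' ob_hd[of s] ob_last[of s] dne by auto
qed

lemma PD_n_transport:
  assumes d: "d \<in> PD_n C n f" and s: "composable C s" and di: "dec_iso C d s" and fA: "f \<in> Ar C"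
  shows "s \<in> PD_n C n f"
proof (cases "n = 1")
  case True then show ?thesis using d D_transport[OF _ s di fA] unfolding PD_n_def by auto
next
  case False
  have dD: "d \<in> D C n f" and ni: "\<forall>g \<in> set d. \<not> iso C g" using d False unfolding PD_n_def by auto
  have cd: "composable C d" using dD unfolding D_def by auto
  obtain \<phi> where L: "length d = length s" and P: "\<forall>i \<le> length d. \<phi> i \<in> hom C (ob d i) (ob s i) \<and> iso C (\<phi> i)"
     and S: "\<forall>i < length d. comp C (\<phi> (Suc i)) (d ! i) = comp C (s ! i) (\<phi> i)"
    using di unfolding dec_iso_alt by blast
  have "\<not> iso C (s ! i)" if i: "i < length s" for i
  proof
    assume si: "iso C (s ! i)"
    have "iso C (d ! i)"
      apply (rule iso_of_square[OF composable_nth_hom[OF cd] composable_nth_hom[OF s], of i i "\<phi> i" "\<phi> (Suc i)"])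
      using i L P S si by auto
    then show False using ni i L by auto
  qed
  then have "\<forall>g \<in> set s. \<not> iso C g" by (auto simp: in_set_conv_nth)
  then show ?thesis using D_transport[OF dD s di fA] False unfolding PD_n_def by auto
qed

lemma conjugate:
  assumes cd: "composable C d" and P: "\<forall>i \<le> length d. \<psi> i \<in> hom C (ob d i) (r i) \<and> iso C (\<psi> i)"
  defines "s \<equiv> map (\<lambda>i. comp C (\<psi> (Suc i)) (comp C (d!i) (invC (\<psi> i)))) [0..<length d]"
  shows "composable C s" "dec_iso C d s" "\<forall>i < length s. s!i \<in> hom C (r i) (r (Suc i))" "length s = length d"
proof -
  have ls: "length s = length d" unfolding s_def by simp
  have snth: "s!i = comp C (\<psi> (Suc i)) (comp C (d!i) (invC (\<psi> i)))" if "i < length d" for i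
    using that unfolding s_def by simp
  have dh: "d!i \<in> hom C (ob d i) (ob d (Suc i))" if "i < length d" for i using composable_nth_hom[OF cd that] .
  have Pi: "\<psi> i \<in> hom C (ob d i) (r i)" "iso C (\<psi> i)" if "i \<le> length d" for i using P that by auto
  have sh: "s!i \<in> hom C (r i) (r (Suc i))" if i: "i < length d" for i
    unfolding snth[OF i]
    by (rule comp_hom[OF comp_hom[OF invC(1)[OF Pi(2,1)] dh] Pi(1)]) (use i in auto)
  show "\<forall>i < length s. s!i \<in> hom C (r i) (r (Suc i))" using sh ls by auto
  show "length s = length d" by (rule ls)
  have dne: "d \<noteq> []" using cd unfolding composable_def by auto
  show cs: "composable C s" unfolding composable_def
  proof (intro conjI allI impI)
    show "s \<noteq> []" using ls dne by auto
    show "set s \<subseteq> Ar C" using sh ls by (auto simp: in_set_conv_nth hom_iff)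
    fix i assume "Suc i < length s"
    then show "cod C (s ! i) = dom C (s ! Suc i)" using sh[of i] sh[of "Suc i"] ls by (auto simp: hom_iff)
  qed
  have obs: "ob s i = r i" if "i \<le> length d" for i
  proof (cases i)
    case 0 then show ?thesis using sh[of 0] dne by (auto simp: hom_iff ob_0)
  next
    case (Suc j) then show ?thesis using sh[of j] that by (auto simp: hom_iff ob_Suc)
  qed
  have "\<forall>i < length d. comp C (\<psi> (Suc i)) (d ! i) = comp C (s ! i) (\<psi> i)"
  proof (intro allI impI)
    fix i assume i: "i < length d"
    note I = invC[OF Pi(2,1)[of i]]
    have A: "\<psi> i \<in> hom C (ob d i) (r i)" using Pi i by auto
    have B: "\<psi> (Suc i) \<in> hom C (ob d (Suc i)) (r (Suc i))" using Pi i by auto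
    have "comp C (s ! i) (\<psi> i) = comp C (\<psi> (Suc i)) (comp C (comp C (d!i) (invC (\<psi> i))) (\<psi> i))"
      unfolding snth[OF i] using assoc[OF A comp_hom[OF I(1) dh[OF i]] B] i by simp
    also have "comp C (comp C (d!i) (invC (\<psi> i))) (\<psi> i) = comp C (d!i) (comp C (invC (\<psi> i)) (\<psi> i))"
      using assoc[OF A I(1) dh[OF i]] i by simp
    also have "\<dots> = d!i" using I(2) id_r dh[OF i] i by simp
    finally show "comp C (\<psi> (Suc i)) (d ! i) = comp C (s ! i) (\<psi> i)" by simp
  qed
  then show "dec_iso C d s" unfolding dec_iso_alt using ls P obs by auto
qed

lemma ob_Ob: assumes "composable C d" "i \<le> length d" shows "ob d i \<in> Ob C"
proof (cases i)
  case 0 then show ?thesis using assms dom_ob unfolding composable_def by (simp add: subset_iff ob_0)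
next
  case (Suc j) then show ?thesis using assms cod_ob unfolding composable_def by (simp add: subset_iff ob_Suc)
qed

lemma reach: assumes "composable C d" "i \<le> j" "j \<le> length d" shows "hom C (ob d i) (ob d j) \<noteq> {}"
  using assms(2,3)
proof (induction j)
  case 0 then show ?case using id_hom ob_Ob[OF assms(1)] by blast
next
  case (Suc j)
  show ?case
  proof (cases "i = Suc j")
    case True then show ?thesis using id_hom ob_Ob[OF assms(1) Suc.prems(2)] by blast
  next
    case False
    then obtain g where "g \<in> hom C (ob d i) (ob d j)" using Suc by force
    moreover have "d!j \<in> hom C (ob d j) (ob d (Suc j))" using composable_nth_hom[OF assms(1)] Suc.prems by simp
    ultimately show ?thesis using comp_hom by blast
  qed
qed

lemma PD_D: "d \<in> PD_n C n f \<Longrightarrow> d \<in> D C n f" unfolding PD_n_def by (auto split: if_splits)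
lemma D_comp: "d \<in> D C n f \<Longrightarrow> composable C d \<and> length d = n" unfolding D_def by auto
lemma PD_iff: "d \<in> PD C f \<longleftrightarrow> (\<exists>n \<ge> 1. d \<in> PD_n C n f)" unfolding PD_def by auto
lemma PD_composable: "d \<in> PD C f \<Longrightarrow> composable C d" using PD_iff PD_D D_comp by blast

lemma class_eq:
  assumes "d \<in> PD C f" "s \<in> PD C f" "dec_iso C d s"
  shows "{(d, e). d \<in> PD C f \<and> e \<in> PD C f \<and> dec_iso C d e}``{d} = {(d, e). d \<in> PD C f \<and> e \<in> PD C f \<and> dec_iso C d e}``{s}"
proof -
  have cd: "composable C d" "composable C s" using assms PD_composable by auto
  have "dec_iso C s d" using dec_iso_sym[OF cd(1,2) assms(3)] .
  have "dec_iso C d e \<longleftrightarrow> dec_iso C s e" if "e \<in> PD C f" for e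
    using dec_iso_trans[OF cd(1,2) PD_composable[OF that] assms(3)]
      dec_iso_trans[OF cd(2,1) PD_composable[OF that] \<open>dec_iso C s d\<close>] by blast
  then show ?thesis using assms by auto
qed

lemma objiso_class: assumes "obj_iso C u v"
  shows "{(a, b). a \<in> Ob C \<and> b \<in> Ob C \<and> obj_iso C a b}``{u} = {(a, b). a \<in> Ob C \<and> b \<in> Ob C \<and> obj_iso C a b}``{v}"
proof -
  have "obj_iso C u w \<longleftrightarrow> obj_iso C v w" for w
    using assms obj_iso_sym obj_iso_trans by metis
  then show ?thesis using assms obj_iso_ob by auto
qed

lemma backward:
  assumes ic: "isocyclic C" and lf: "ess_locally_finite C" and fA: "f \<in> Ar C"
  shows "finite (PD C f // {(d, e). d \<in> PD C f \<and> e \<in> PD C f \<and> dec_iso C d e})"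
proof -
  define Q where "Q = {(d, e). d \<in> PD C f \<and> e \<in> PD C f \<and> dec_iso C d e}"
  define x where "x = dom C f"
  define y where "y = cod C f"
  define Mid where "Mid = {z \<in> Ob C. hom C x z \<noteq> {} \<and> hom C z y \<noteq> {}}"
  define R where "R = {(a, b). a \<in> Ob C \<and> b \<in> Ob C \<and> obj_iso C a b}"
  have xO: "x \<in> Ob C" "y \<in> Ob C" using fA dom_ob cod_ob x_def y_def by auto
  have finOR: "finite (Mid // R)" using lf xO unfolding ess_locally_finite_def Mid_def R_def by blast
  define rep where "rep z = (SOME w. w \<in> R``{z})" for z
  have rep: "rep z \<in> Ob C \<and> obj_iso C z (rep z)" if "z \<in> Ob C" for z
  proof -
    have "z \<in> R``{z}" using that obj_iso_refl unfolding R_def by auto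
    then have "rep z \<in> R``{z}" unfolding rep_def by (rule someI)
    then show ?thesis unfolding R_def by auto
  qed
  define Reps where "Reps = rep ` Mid"
  have "Reps \<subseteq> (\<lambda>K. SOME w. w \<in> K) ` (Mid // R)"
    unfolding Reps_def rep_def using quotientI[of _ Mid R] by blast
  then have finReps: "finite Reps" using finOR finite_surj by blast
  have RepsOb: "Reps \<subseteq> Ob C" unfolding Reps_def Mid_def using rep by auto
  define H where "H = (\<Union>a \<in> Reps. \<Union>b \<in> Reps. hom C a b)"
  have finH: "finite H" unfolding H_def
  proof (intro finite_UN_I finReps)
    fix a b assume "a \<in> Reps" "b \<in> Reps"
    then show "finite (hom C a b)" using RepsOb lf unfolding ess_locally_finite_def by blast
  qed
  define N where "N = card Reps + 1"
  define S where "S = {s. set s \<subseteq> H \<and> length s \<le> N}"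
  have finS: "finite S" unfolding S_def using finite_lists_length_le[OF finH] .
  have claim: "\<exists>s \<in> S. s \<in> PD C f \<and> dec_iso C d s" if dP: "d \<in> PD C f" for d
  proof -
    obtain n where n1: "n \<ge> 1" and dn: "d \<in> PD_n C n f" using dP PD_iff by blast
    have dD: "d \<in> D C n f" using PD_D[OF dn] .
    have cd: "composable C d" and ld: "length d = n" using D_comp[OF dD] by auto
    have dne: "d \<noteq> []" using cd unfolding composable_def by auto
    obtain \<alpha> \<beta> where A: "\<alpha> \<in> hom C (dom C (hd d)) x" "iso C \<alpha>"
      and B: "\<beta> \<in> hom C (cod C (last d)) y" "iso C \<beta>"
      using dD unfolding D_def x_def y_def by blast
    have A': "invC \<alpha> \<in> hom C x (ob d 0)" using invC(1)[OF A(2,1)] ob_hd[OF dne] by simp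
    have B': "\<beta> \<in> hom C (ob d n) y" using B ob_last[OF dne] ld by simp
    have obO: "ob d i \<in> Mid" if iN: "i \<le> n" for i
    proof -
      obtain g where g: "g \<in> hom C (ob d 0) (ob d i)" using reach[OF cd, of 0 i] iN ld by auto
      obtain h where h: "h \<in> hom C (ob d i) (ob d n)" using reach[OF cd, of i n] iN ld by auto
      show ?thesis unfolding Mid_def using ob_Ob[OF cd, of i] iN ld comp_hom[OF A' g] comp_hom[OF h B'] by auto
    qed
    define \<psi> where "\<psi> i = (SOME g. g \<in> hom C (ob d i) (rep (ob d i)) \<and> iso C g)" for i
    have P: "\<forall>i \<le> length d. \<psi> i \<in> hom C (ob d i) (rep (ob d i)) \<and> iso C (\<psi> i)"
    proof (intro allI impI)
      fix i assume "i \<le> length d"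
      then have "obj_iso C (ob d i) (rep (ob d i))" using rep ob_Ob[OF cd] by blast
      then have "\<exists>g. g \<in> hom C (ob d i) (rep (ob d i)) \<and> iso C g" unfolding obj_iso_def by blast
      then show "\<psi> i \<in> hom C (ob d i) (rep (ob d i)) \<and> iso C (\<psi> i)" unfolding \<psi>_def by (rule someI_ex)
    qed
    define s where "s = map (\<lambda>i. comp C (\<psi> (Suc i)) (comp C (d!i) (invC (\<psi> i)))) [0..<length d]"
    note cj = conjugate[OF cd P, folded s_def]
    have sPD: "s \<in> PD C f" using PD_n_transport[OF dn cj(1) cj(2) fA] n1 PD_iff by blast
    have sH: "set s \<subseteq> H"
    proof
      fix g assume "g \<in> set s"
      then obtain i where i: "i < length s" "g = s!i" by (auto simp: in_set_conv_nth)
      have "rep (ob d i) \<in> Reps" "rep (ob d (Suc i)) \<in> Reps" using obO i cj(4) ld unfolding Reps_def by auto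
      then show "g \<in> H" using cj(3) i unfolding H_def by blast
    qed
    have "n \<le> card Reps + 1"
    proof (cases "n \<ge> 2")
      case False then show ?thesis by simp
    next
      case True
      have ni: "\<forall>g \<in> set d. \<not> iso C g" using dn True unfolding PD_n_def by auto
      have neq: "rep (ob d i) \<noteq> rep (ob d j)" if ij: "i < j" "j \<le> n" for i j
      proof
        assume eq: "rep (ob d i) = rep (ob d j)"
        have "obj_iso C (ob d i) (rep (ob d i))" "obj_iso C (ob d j) (rep (ob d j))"
          using rep ob_Ob[OF cd, of i] ob_Ob[OF cd, of j] ij ld by auto
        then have "obj_iso C (ob d i) (ob d j)"
          using eq obj_iso_sym obj_iso_trans by metis
        then obtain u where u: "u \<in> hom C (ob d j) (ob d i)"
          using obj_iso_sym unfolding obj_iso_def by blast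
        obtain v where v: "v \<in> hom C (ob d (Suc i)) (ob d j)" using reach[OF cd, of "Suc i" j] ij ld by auto
        have di: "d!i \<in> hom C (ob d i) (ob d (Suc i))" using composable_nth_hom[OF cd] ij ld by simp
        have "iso C (d!i)" using ic di comp_hom[OF v u] ob_Ob[OF cd] ij ld unfolding isocyclic_def
          by (meson Suc_leI le_trans less_imp_le_nat)
        then show False using ni ij ld by auto
      qed
      have "inj_on (\<lambda>i. rep (ob d i)) {0..n}"
      proof (rule inj_onI)
        fix i j assume "i \<in> {0..n}" "j \<in> {0..n}" "rep (ob d i) = rep (ob d j)"
        then show "i = j" using neq by (metis atLeastAtMost_iff linorder_neqE_nat)
      qed
      moreover have "(\<lambda>i. rep (ob d i)) ` {0..n} \<subseteq> Reps" using obO unfolding Reps_def by auto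
      ultimately have "card {0..n} \<le> card Reps" using card_inj_on_le finReps by blast
      then show ?thesis by simp
    qed
    then have "s \<in> S" unfolding S_def N_def using sH cj(4) ld by auto
    then show ?thesis using sPD cj(2) by blast
  qed
  have "PD C f // Q \<subseteq> (\<lambda>s. Q``{s}) ` S"
  proof
    fix K assume "K \<in> PD C f // Q"
    then obtain d where K: "K = Q``{d}" and d: "d \<in> PD C f" by (auto elim: quotientE)
    obtain s where "s \<in> S" "s \<in> PD C f" "dec_iso C d s" using claim[OF d] by blast
    then show "K \<in> (\<lambda>s. Q``{s}) ` S" using K class_eq[OF d] unfolding Q_def by blast
  qed
  then show ?thesis using finS finite_surj unfolding Q_def by blast
qed

lemma iso_from_both:
  assumes f: "f \<in> hom C x y" and g: "g \<in> hom C y x" and i1: "iso C (comp C g f)" and i2: "iso C (comp C f g)"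
  shows "iso C f"
proof -
  have gf: "comp C g f \<in> hom C x x" and fg: "comp C f g \<in> hom C y y" using comp_hom f g by auto
  note I1 = invC[OF i1 gf] and I2 = invC[OF i2 fg]
  define u where "u = comp C (invC (comp C g f)) g"
  define v where "v = comp C g (invC (comp C f g))"
  have u: "u \<in> hom C y x" unfolding u_def using comp_hom[OF g I1(1)] .
  have v: "v \<in> hom C y x" unfolding v_def using comp_hom[OF I2(1) g] .
  have uf: "comp C u f = idm C x" unfolding u_def using assoc[OF f g I1(1)] I1(2) by simp
  have fv: "comp C f v = idm C y" unfolding v_def using assoc[OF I2(1) g f] I2(3) by simp
  have "u = comp C u (comp C f v)" using fv id_r u by simp
  also have "\<dots> = comp C (comp C u f) v" using assoc[OF v f u] .
  also have "\<dots> = v" using uf id_l v by simp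
  finally have uv: "u = v" .
  show ?thesis unfolding iso_def using f u uf fv uv by (auto simp: hom_iff)
qed

lemma epow_hom: "e \<in> hom C w w \<Longrightarrow> w \<in> Ob C \<Longrightarrow> epow C e w k \<in> hom C w w"
  by (induction k) (auto intro: id_hom comp_hom)

lemma epow_add: assumes e: "e \<in> hom C w w" "w \<in> Ob C"
  shows "epow C e w (j + k) = comp C (epow C e w j) (epow C e w k)"
proof (induction k)
  case 0 then show ?case using id_r[OF epow_hom[OF e, of j]] by simp
next
  case (Suc k)
  then show ?case using assoc[OF e(1) epow_hom[OF e, of k] epow_hom[OF e, of j]] by simp
qed

lemma epow_period: assumes e: "e \<in> hom C w w" "w \<in> Ob C" and eq: "epow C e w a = epow C e w (a + p)"
  shows "epow C e w (a + t * p) = epow C e w a"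
proof (induction t)
  case 0 then show ?case by simp
next
  case (Suc t)
  have "epow C e w (a + Suc t * p) = epow C e w (p + (a + t * p))" by (simp add: algebra_simps)
  also have "\<dots> = comp C (epow C e w p) (epow C e w a)" using epow_add[OF e] Suc by simp
  also have "\<dots> = epow C e w (p + a)" using epow_add[OF e] by simp
  finally show ?case using eq by (simp add: add.commute)
qed

lemma composite_rep: "composite C (replicate (Suc k) e) = epow C e w (Suc k)" if "e \<in> hom C w w"
  using that
proof (induction k)
  case 0 then show ?case using id_l by simp
next
  case (Suc k) then show ?case by simp
qed

lemma rep_PD:
  assumes e: "e \<in> hom C w w" "w \<in> Ob C" "\<not> iso C e" and k: "k \<ge> 1"
  shows "replicate k e \<in> PD C (epow C e w k)"
proof -
  obtain k' where k': "k = Suc k'" using k by (cases k) auto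
  let ?d = "replicate k e"
  have eA: "e \<in> Ar C" and ed: "dom C e = w" "cod C e = w" using e by (auto simp: hom_iff)
  have cd: "composable C ?d" unfolding composable_def
  proof (intro conjI allI impI)
    show "?d \<noteq> []" using k by simp
    show "set ?d \<subseteq> Ar C" using eA by auto
    fix i assume "Suc i < length ?d"
    then show "cod C (?d ! i) = dom C (?d ! Suc i)" using ed by simp
  qed
  have h: "epow C e w k \<in> hom C w w" using epow_hom[OF e(1,2)] .
  have "?d \<in> D C k (epow C e w k)" unfolding D_def
  proof (intro CollectI conjI exI)
    show "length ?d = k" "composable C ?d" using cd by auto
    show "idm C w \<in> hom C (dom C (hd ?d)) (dom C (epow C e w k))" using k' e h id_hom by (auto simp: hom_iff)
    show "idm C w \<in> hom C (cod C (last ?d)) (cod C (epow C e w k))" using k' e h id_hom by (auto simp: hom_iff)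
    show "iso C (idm C w)" "iso C (idm C w)" using iso_id e by auto
    show "comp C (idm C w) (composite C ?d) = comp C (epow C e w k) (idm C w)"
      using composite_rep[OF e(1)] k' id_l id_r h by simp
  qed
  note dD = this
  have ni: "\<forall>g \<in> set ?d. \<not> iso C g" using e by simp
  have "?d \<in> PD_n C k (epow C e w k)"
  proof (cases "k = 1")
    case True then show ?thesis unfolding PD_n_def using dD by (subst if_P[OF True]) (simp only: True)
  next
    case False then show ?thesis unfolding PD_n_def using dD ni by (subst if_not_P[OF False]) blast
  qed
  then show ?thesis using k PD_iff by blast
qed

lemma forward_isocyclic:
  assumes efd: "ess_finite_decomposition C" and fin: "\<forall>x \<in> Ob C. \<forall>y \<in> Ob C. finite (hom C x y)"
  shows "isocyclic C"
  unfolding isocyclic_def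
proof (intro ballI)
  fix x y f g assume x: "x \<in> Ob C" and y: "y \<in> Ob C" and f: "f \<in> hom C x y" and g: "g \<in> hom C y x"
  show "iso C f \<and> iso C g"
  proof (rule ccontr)
    assume nboth: "\<not> (iso C f \<and> iso C g)"
    have "\<exists>w e. w \<in> Ob C \<and> e \<in> hom C w w \<and> \<not> iso C e"
    proof (rule ccontr)
      assume "\<not> ?thesis"
      then have nn: "\<And>w e. w \<in> Ob C \<Longrightarrow> e \<in> hom C w w \<Longrightarrow> iso C e" by blast
      have "comp C g f \<in> hom C x x" "comp C f g \<in> hom C y y" using comp_hom f g by auto
      then have "iso C (comp C g f)" "iso C (comp C f g)" using nn x y by auto
      then have "iso C f" "iso C g" using iso_from_both f g by auto
      then show False using nboth by simp
    qed
    then obtain w e where w: "w \<in> Ob C" and e: "e \<in> hom C w w" and ne: "\<not> iso C e" by blast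
    have "\<not> inj_on (epow C e w) {1..}"
    proof
      assume "inj_on (epow C e w) {1..}"
      moreover have "epow C e w ` {1..} \<subseteq> hom C w w" using epow_hom[OF e w] by auto
      ultimately have "finite ({1..} :: nat set)" using fin w finite_imageD finite_subset by metis
      then show False using infinite_Ici[of "1::nat"] by simp
    qed
    then obtain a b where ab: "a \<ge> 1" "b \<ge> 1" "a \<noteq> b" "epow C e w a = epow C e w b"
      unfolding inj_on_def by auto
    then obtain a p where ap: "a \<ge> 1" "p \<ge> 1" "epow C e w a = epow C e w (a + p)"
    proof (cases "a < b")
      case True then show ?thesis using that[of a "b - a"] ab by auto
    next
      case False then show ?thesis using that[of b "a - b"] ab by auto
    qed
    define h where "h = epow C e w a"
    define Q where "Q = {(d, e). d \<in> PD C h \<and> e \<in> PD C h \<and> dec_iso C d e}"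
    have hA: "h \<in> Ar C" using epow_hom[OF e w] unfolding h_def by (simp add: hom_iff)
    have finQ: "finite (PD C h // Q)" using bspec[OF efd[unfolded ess_finite_decomposition_def] hA] unfolding Q_def .
    define K where "K = (\<lambda>t. a + t * p) ` UNIV"
    have "inj (\<lambda>t. a + t * p)" by (rule injI) (use ap in simp)
    then have infK: "infinite K" unfolding K_def using finite_imageD infinite_UNIV_nat by blast
    have inPD: "replicate k e \<in> PD C h" if kK: "k \<in> K" for k
    proof -
      obtain t where t: "k = a + t * p" using kK K_def by auto
      have k1: "k \<ge> 1" using t ap by simp
      have "epow C e w k = h" unfolding h_def t by (rule epow_period[OF e w ap(3)])
      then show ?thesis using rep_PD[OF e w ne k1] by simp
    qed
    have "inj_on (\<lambda>k. Q``{replicate k e}) K"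
    proof (rule inj_onI)
      fix k k' assume k: "k \<in> K" and k': "k' \<in> K" and eq: "Q``{replicate k e} = Q``{replicate k' e}"
      have "replicate k' e \<in> Q``{replicate k' e}"
        using inPD[OF k'] dec_iso_refl[OF PD_composable[OF inPD[OF k']]] unfolding Q_def by auto
      then have "dec_iso C (replicate k e) (replicate k' e)" using eq unfolding Q_def by auto
      then have "length (replicate k e) = length (replicate k' e)" unfolding dec_iso_def by (elim conjE)
      then show "k = k'" by simp
    qed
    moreover have "(\<lambda>k. Q``{replicate k e}) ` K \<subseteq> PD C h // Q" 
      by (rule image_subsetI) (rule quotientI[OF inPD])
    then have "finite ((\<lambda>k. Q``{replicate k e}) ` K)" using finQ by (rule finite_subset)
    ultimately have "finite K" using finite_imageD by blast
    then show False using infK by simp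
  qed
qed

lemma forward_lf:
  assumes efd: "ess_finite_decomposition C" and fin: "\<forall>x \<in> Ob C. \<forall>y \<in> Ob C. finite (hom C x y)"
    and ic: "isocyclic C"
  shows "ess_locally_finite C"
  unfolding ess_locally_finite_def
proof (intro conjI ballI impI)
  fix x y assume x: "x \<in> Ob C" and y: "y \<in> Ob C"
  show "finite (hom C x y)" using fin x y by blast
  {
    assume "hom C x y \<noteq> {}" "hom C y x \<noteq> {}"
    then obtain f g where f: "f \<in> hom C x y" and g: "g \<in> hom C y x" by blast
    then have "iso C f" using ic x y unfolding isocyclic_def by blast
    then show "obj_iso C x y" unfolding obj_iso_def using f by blast
  }
  define Z where "Z = {z \<in> Ob C. hom C x z \<noteq> {} \<and> hom C z y \<noteq> {}}"
  define R where "R = {(a, b). a \<in> Ob C \<and> b \<in> Ob C \<and> obj_iso C a b}"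
  define Qh where "Qh h = {(d, e). d \<in> PD C h \<and> e \<in> PD C h \<and> dec_iso C d e}" for h
  define mid where "mid L = R``{cod C (hd (SOME e. e \<in> L))}" for L
  have "Z // R \<subseteq> {R``{x}, R``{y}} \<union> (\<Union>h \<in> hom C x y. mid ` (PD C h // Qh h))"
  proof
    fix K assume "K \<in> Z // R"
    then obtain z where K: "K = R``{z}" and z: "z \<in> Z" by (auto elim: quotientE)
    obtain a b where a: "a \<in> hom C x z" and b: "b \<in> hom C z y" using z unfolding Z_def by blast
    show "K \<in> {R``{x}, R``{y}} \<union> (\<Union>h \<in> hom C x y. mid ` (PD C h // Qh h))"
    proof (cases "iso C a \<or> iso C b")
      case True
      then have "obj_iso C x z \<or> obj_iso C z y" using a b unfolding obj_iso_def by blast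
      then have "R``{z} = R``{x} \<or> R``{z} = R``{y}"
      proof
        assume "obj_iso C x z"
        then have "R``{x} = R``{z}" unfolding R_def by (rule objiso_class)
        then show ?thesis by simp
      next
        assume "obj_iso C z y"
        then have "R``{z} = R``{y}" unfolding R_def by (rule objiso_class)
        then show ?thesis by simp
      qed
      then show ?thesis using K by blast
    next
      case False
      define h where "h = comp C b a"
      have hh: "h \<in> hom C x y" unfolding h_def using comp_hom[OF a b] .
      define d where "d = [a, b]"
      have cd: "composable C d" unfolding d_def using a b composable_Cons[of a "[b]"] composable_Cons[of b "[]"]
        by (auto simp: hom_iff)
      have "d \<in> D C 2 h" unfolding D_def
      proof (intro CollectI conjI exI)
        show "length d = 2" "composable C d" using cd d_def by auto
        show "idm C x \<in> hom C (dom C (hd d)) (dom C h)" using a hh id_hom x by (auto simp: hom_iff d_def)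
        show "idm C y \<in> hom C (cod C (last d)) (cod C h)" using b hh id_hom y by (auto simp: hom_iff d_def)
        show "iso C (idm C x)" "iso C (idm C y)" using iso_id x y by auto
        show "comp C (idm C y) (composite C d) = comp C h (idm C x)"
          using id_l[OF hh] id_r[OF hh] unfolding d_def h_def by simp
      qed
      moreover have "\<forall>g \<in> set d. \<not> iso C g" using False d_def by auto
      moreover have two: "(2::nat) \<noteq> 1" by simp
      ultimately have "d \<in> PD_n C 2 h" unfolding PD_n_def if_not_P[OF two] by blast
      then have dP: "d \<in> PD C h" unfolding PD_def by (rule UN_I[rotated]) simp
      define L where "L = Qh h `` {d}"
      have LQ: "L \<in> PD C h // Qh h" unfolding L_def using quotientI[OF dP] .
      have "(d, d) \<in> Qh h" unfolding Qh_def using dP dec_iso_refl[OF cd] by blast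
      then have "d \<in> L" unfolding L_def by blast
      then have e0: "(SOME e. e \<in> L) \<in> L" by (rule someI)
      define e0 where "e0 = (SOME e. e \<in> L)"
      have e0P: "e0 \<in> PD C h" and de: "dec_iso C d e0" using e0 unfolding e0_def L_def Qh_def by auto
      have ce: "composable C e0" using PD_composable[OF e0P] .
      then have ene: "e0 \<noteq> []" unfolding composable_def by auto
      obtain \<phi> where P: "\<forall>i \<le> length d. \<phi> i \<in> hom C (ob d i) (ob e0 i) \<and> iso C (\<phi> i)"
        using de unfolding dec_iso_alt by blast
      have "\<phi> 1 \<in> hom C (ob d 1) (ob e0 1)" "iso C (\<phi> 1)" using P d_def by auto
      moreover have "ob d 1 = z" using a unfolding d_def by (simp add: ob_def hom_iff)
      moreover have "ob e0 1 = cod C (hd e0)" using ene by (simp add: ob_def hd_conv_nth)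
      ultimately have "obj_iso C z (cod C (hd e0))" unfolding obj_iso_def by metis
      then have "R``{z} = mid L" unfolding mid_def e0_def[symmetric] R_def by (rule objiso_class)
      then show ?thesis using K LQ hh by blast
    qed
  qed
  moreover have "finite ({R``{x}, R``{y}} \<union> (\<Union>h \<in> hom C x y. mid ` (PD C h // Qh h)))"
  proof -
    have "finite (PD C h // Qh h)" if "h \<in> hom C x y" for h
      using bspec[OF efd[unfolded ess_finite_decomposition_def], of h] that unfolding Qh_def by (simp add: hom_iff)
    then show ?thesis using fin x y by auto
  qed
  ultimately show "finite ({z \<in> Ob C. hom C x z \<noteq> {} \<and> hom C z y \<noteq> {}}
                // {(a, b). a \<in> Ob C \<and> b \<in> Ob C \<and> obj_iso C a b})"
    unfolding Z_def R_def using finite_subset by blast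
qed

end

theorem theorem8p1:
  fixes C :: "('o, 'm) cat"
  assumes "category C"
    and "\<forall>x \<in> Ob C. \<forall>y \<in> Ob C. finite (hom C x y)"
  shows "ess_finite_decomposition C \<longleftrightarrow> isocyclic C \<and> ess_locally_finite C"
proof -
  interpret catC C by unfold_locales (rule assms(1))
  show ?thesis
  proof
    assume efd: "ess_finite_decomposition C"
    have "isocyclic C" using forward_isocyclic[OF efd assms(2)] .
    then show "isocyclic C \<and> ess_locally_finite C" using forward_lf[OF efd assms(2)] by blast
  next
    assume "isocyclic C \<and> ess_locally_finite C"
    then show "ess_finite_decomposition C" unfolding ess_finite_decomposition_def using backward by blast
  qed
qed

end
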